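(* Let $d\ge1$, $\beta\in[0,1]$, $0<\lambda<\Lambda$, $\delta>0$, $T,R\in(0,1]$, $\underline{T}\in(0,T)$ and $(x_0,v_0)\in\mathbb{T}^d\times\mathbb{R}^d$. Let $h$ be a classical solution with $0\le h\le\Lambda$ of \[ (\partial_t+v\cdot\nabla_x)h=\mathscr{R}_h(t,x)\,(\nabla_v-v)\cdot\nabla_vh,\qquad \mathscr{R}_h=\Big(\int_{\mathbb{R}^d}h\,d\mu\Big)^\beta, \] in $(0,T]\times\mathbb{T}^d\times\mathbb{R}^d$ such that for all $t\in[0,T]$, $h(t,x,v)\ge\delta\mathbb{1}_{\{|x-x_0-tv_0|<R,\,|v-v_0|<R\}}$. Then there is a constant $\underline{C}>0$ depending only on $d,\beta,\lambda,\Lambda,\underline{T},\delta,R,v_0$ such that for all $t\in[\underline{T},T]$ and $(x,v)\in\mathbb{T}^d\times\mathbb{R}^d$, \[ h(t,x,v)\ge\underline{C}^{-1}e^{-\underline{C}|v|^4}\mathbb{1}_{\{|x-x_0-tv_0|<R/2\}}. \]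
   Context: $\mathbb{T}^d$ is the unit-volume torus with its distance; $d\mu=(2\pi)^{-d/2}e^{-|v|^2/2}dv$. A classical solution is nonnegative, satisfies the equation pointwise and matches the initial data continuously. *)

theory Defs
  imports "HOL-Analysis.Analysis"
begin

text \<open>The unit-volume torus T^d is represented by R^d = real^'n modulo the
integer lattice: functions on T^d are Z^d-periodic functions on R^d.\<close>

definition int_vec :: "real^'n \<Rightarrow> bool" where
  "int_vec z \<longleftrightarrow> (\<forall>i. z $ i \<in> \<int>)"

definition torus_dist :: "real^'n \<Rightarrow> real^'n \<Rightarrow> real" where
  "torus_dist x y = Inf {norm (x - y - z) | z. int_vec z}"

definition gauss :: "real^'n \<Rightarrow> real" where
  "gauss v = (2 * pi) powr (- real CARD('n) / 2) * exp (- (norm v)\<^sup>2 / 2)"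

definition mu_integral :: "(real^'n \<Rightarrow> real) \<Rightarrow> real" where
  "mu_integral f = integral\<^sup>L lborel (\<lambda>v. f v * gauss v)"

text \<open>The power a^beta for a \<ge> 0, with the convention 0^0 = 1.\<close>
definition pow_beta :: "real \<Rightarrow> real \<Rightarrow> real" where
  "pow_beta a \<beta> = (if a = 0 then (if \<beta> = 0 then 1 else 0) else a powr \<beta>)"

definition Rcoef :: "real \<Rightarrow> (real \<Rightarrow> real^'n \<Rightarrow> real^'n \<Rightarrow> real) \<Rightarrow> real \<Rightarrow> real^'n \<Rightarrow> real" where
  "Rcoef \<beta> h t x = pow_beta (mu_integral (h t x)) \<beta>"

text \<open>Classical solution on (0,T] x T^d x R^d of
  (d_t + v.grad_x) h = R_h (grad_v - v).grad_v h :
  h is Z^d-periodic in x, nonnegative, continuous on [0,T] x T^d x R^d (so it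
  matches its initial datum h(0) continuously), and at every point of
  (0,T] x T^d x R^d the derivatives occurring in the equation exist
  (d_t h one-sided at t = T; grad_v h exists near v and is differentiable at v,
  Delta_v h being the trace of its derivative) and the equation holds.\<close>
definition classical_solution ::
  "real \<Rightarrow> real \<Rightarrow> (real \<Rightarrow> real^'n \<Rightarrow> real^'n \<Rightarrow> real) \<Rightarrow> bool" where
  "classical_solution \<beta> T h \<longleftrightarrow>
     (\<forall>t x v z. int_vec z \<longrightarrow> h t (x + z) v = h t x v) \<and>
     (\<forall>t\<in>{0..T}. \<forall>x v. 0 \<le> h t x v) \<and>
     continuous_on ({0..T} \<times> UNIV \<times> UNIV) (\<lambda>(t, x, v). h t x v) \<and>
     (\<forall>t\<in>{0<..T}. \<forall>x v.
        \<exists>ht gx G Dg.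
          ((\<lambda>s. h s x v) has_real_derivative ht) (at t within {0..T}) \<and>
          ((\<lambda>y. h t y v) has_derivative (\<lambda>w. gx \<bullet> w)) (at x) \<and>
          (\<forall>\<^sub>F u in nhds v. ((\<lambda>u'. h t x u') has_derivative (\<lambda>w. G u \<bullet> w)) (at u)) \<and>
          (G has_derivative Dg) (at v) \<and>
          ht + v \<bullet> gx =
            Rcoef \<beta> h t x * ((\<Sum>i\<in>UNIV. Dg (axis i 1) $ i) - v \<bullet> G v))"

end

theory Submission
  imports Defs "HOL-Probability.Distributions"
begin

lemma exp_std_integrable: "integrable lborel (\<lambda>t::real. exp (- t\<^sup>2 / 2))"
proof -
  have "integrable lborel (\<lambda>t::real. sqrt (2*pi) * (std_normal_density t * t ^ 0))"
    using integrable_std_normal_moment[of 0] by (intro integrable_mult_right)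
  moreover have "(\<lambda>t::real. sqrt (2*pi) * (std_normal_density t * t ^ 0)) = (\<lambda>t. exp (- t\<^sup>2 / 2))"
    by (auto simp: normal_density_def fun_eq_iff)
  ultimately show ?thesis by metis
qed

lemma norm_sq_basis: "(norm (v::'a::euclidean_space))\<^sup>2 = (\<Sum>b\<in>Basis. (v \<bullet> b)\<^sup>2)"
proof -
  have "(norm v)\<^sup>2 = v \<bullet> v" by (rule power2_norm_eq_inner)
  also have "\<dots> = (\<Sum>b\<in>Basis. (v \<bullet> b) * (v \<bullet> b))" by (rule euclidean_inner)
  finally show ?thesis by (simp add: power2_eq_square)
qed

lemma gauss_integrable: "integrable lborel (gauss :: real^'n \<Rightarrow> real)"
proof (rule integrableI_nonneg)
  show "gauss \<in> borel_measurable lborel" unfolding gauss_def by measurable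
  show "AE x in lborel. 0 \<le> gauss x" by (auto simp: gauss_def)
  define c where "c = (2 * pi) powr (- real CARD('n) / 2)"
  have eq: "\<And>v::real^'n. ennreal (gauss v) = ennreal c * (\<Prod>b\<in>Basis. ennreal (exp (- (v \<bullet> b)\<^sup>2 / 2)))"
  proof -
    fix v :: "real^'n"
    have "exp (- (norm v)\<^sup>2 / 2) = (\<Prod>b\<in>Basis. exp (- (v \<bullet> b)\<^sup>2 / 2))"
      by (simp add: norm_sq_basis exp_sum[symmetric] sum_divide_distrib[symmetric] sum_negf)
    then show "ennreal (gauss v) = ennreal c * (\<Prod>b\<in>Basis. ennreal (exp (- (v \<bullet> b)\<^sup>2 / 2)))"
      by (simp add: gauss_def c_def ennreal_mult prod_nonneg prod_ennreal)
  qed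
  have fin: "(\<integral>\<^sup>+t. ennreal (exp (- t\<^sup>2 / 2)) \<partial>lborel) < \<infinity>"
    using exp_std_integrable[unfolded integrable_iff_bounded] by simp
  have "(\<integral>\<^sup>+v. ennreal (gauss v) \<partial>(lborel::(real^'n) measure))
      = ennreal c * (\<integral>\<^sup>+v. (\<Prod>b\<in>Basis. ennreal (exp (- (v \<bullet> b)\<^sup>2 / 2))) \<partial>(lborel::(real^'n) measure))"
    by (simp add: eq nn_integral_cmult)
  also have "\<dots> = ennreal c * (\<Prod>b\<in>(Basis::(real^'n) set). (\<integral>\<^sup>+t. ennreal (exp (- t\<^sup>2 / 2)) \<partial>lborel))"
    by (subst nn_integral_lborel_prod) auto
  also have "\<dots> < \<infinity>" using fin by (simp add: ennreal_mult_less_top less_top ennreal_prod_eq_top power_less_top_ennreal)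
  finally show "(\<integral>\<^sup>+v. ennreal (gauss v) \<partial>(lborel::(real^'n) measure)) < \<infinity>" .
qed

definition I0 :: "real \<Rightarrow> real \<Rightarrow> real^'n \<Rightarrow> real" where
  "I0 \<delta> R v0 = (\<integral>v. \<delta> * indicator (ball v0 R) v * gauss v \<partial>lborel)"

lemma gauss_pos: "0 < gauss v" by (simp add: gauss_def)
lemma gauss_ne0[simp]: "gauss v \<noteq> 0" using gauss_pos[of v] by simp

lemma I0_integrable: "integrable lborel (\<lambda>v::real^'n. \<delta> * indicator (ball v0 R) v * gauss v)"
proof -
  have "integrable lborel (\<lambda>v::real^'n. indicator (ball v0 R) v *\<^sub>R (\<delta> * gauss v))"
    by (rule integrable_mult_indicator) (auto intro: gauss_integrable)
  then show ?thesis by (simp add: mult_ac)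
qed

lemma ubv_ne0: "unit_ball_vol (real n) \<noteq> 0"
  using unit_ball_vol_pos[of "real n"] by linarith

lemma I0_pos:
  assumes "0 < \<delta>" "0 < R"
  shows "0 < I0 \<delta> R (v0::real^'n)"
proof -
  have nn: "AE v in lborel. 0 \<le> \<delta> * indicator (ball v0 R) v * gauss (v::real^'n)"
    using assms by (intro AE_I2) (auto simp: indicator_def intro!: mult_nonneg_nonneg less_imp_le[OF gauss_pos])
  have "0 \<le> I0 \<delta> R v0" unfolding I0_def by (rule integral_nonneg_AE[OF nn])
  moreover have "I0 \<delta> R v0 \<noteq> 0"
  proof
    assume "I0 \<delta> R v0 = 0"
    then have "AE v in lborel. \<delta> * indicator (ball v0 R) v * gauss (v::real^'n) = 0"
      unfolding I0_def using integral_nonneg_eq_0_iff_AE[OF I0_integrable nn] by simp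
    then have "AE v in lborel. v \<notin> ball v0 R"
      by eventually_elim (use assms gauss_pos in \<open>auto simp: indicator_def split: if_splits\<close>)
    then have "emeasure lborel (ball v0 R) = 0"
      by (subst (asm) AE_iff_measurable[where N="ball v0 R"]) auto
    moreover have "emeasure lborel (ball v0 R) \<noteq> 0"
      using assms ubv_ne0 by (simp add: emeasure_ball)
    ultimately show False by simp
  qed
  ultimately show ?thesis by simp
qed

lemma pow_beta_bounds:
  assumes "0 \<le> \<beta>" "\<beta> \<le> 1" "0 < a" "a \<le> I" "I \<le> b"
  shows "min 1 a \<le> pow_beta I \<beta> \<and> pow_beta I \<beta> \<le> max 1 b"
proof -
  have I: "0 < I" using assms by simp
  have lo: "min 1 a \<le> I powr \<beta>"
  proof (cases "I \<le> 1")
    case True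
    have "I powr 1 \<le> I powr \<beta>" using True I assms by (intro powr_mono') auto
    then show ?thesis using I assms by simp
  next
    case False
    then have "1 \<le> I powr \<beta>" using assms by (intro ge_one_powr_ge_zero) auto
    then show ?thesis by simp
  qed
  have hi: "I powr \<beta> \<le> max 1 b"
  proof (cases "I \<le> 1")
    case True
    then have "I powr \<beta> \<le> 1" using I assms by (intro powr_le1) auto
    then show ?thesis by simp
  next
    case False
    then have "I powr \<beta> \<le> I powr 1" using assms by (intro powr_mono) auto
    then show ?thesis using I assms by simp
  qed
  show ?thesis using lo hi I unfolding pow_beta_def by simp
qed

lemma coef_bounds:
  fixes f :: "real^'n \<Rightarrow> real"
  assumes cont: "continuous_on UNIV f" and nn: "\<And>v. 0 \<le> f v" and up: "\<And>v. f v \<le> \<Lambda>"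
    and low: "\<And>v. norm (v - v0) < R \<Longrightarrow> \<delta> \<le> f v"
    and b: "0 \<le> \<beta>" "\<beta> \<le> 1" and d: "0 < \<delta>" "0 < R"
  shows "min 1 (I0 \<delta> R v0) \<le> pow_beta (mu_integral f) \<beta> \<and>
         pow_beta (mu_integral f) \<beta> \<le> max 1 (\<Lambda> * integral\<^sup>L lborel (gauss :: real^'n \<Rightarrow> real))"
proof (rule pow_beta_bounds[OF b I0_pos[OF d]])
  have meas: "(\<lambda>v. f v * gauss v) \<in> borel_measurable lborel"
  proof -
    have "f \<in> borel_measurable borel" using cont by (rule borel_measurable_continuous_onI)
    then have "f \<in> borel_measurable lborel" by simp
    moreover have "gauss \<in> borel_measurable (lborel::(real^'n) measure)" unfolding gauss_def by measurable
    ultimately show ?thesis by measurable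
  qed
  have int: "integrable lborel (\<lambda>v. f v * gauss v)"
  proof (rule Bochner_Integration.integrable_bound[OF integrable_mult_right[OF gauss_integrable, of \<Lambda>] meas])
    show "AE x in lborel. norm (f x * gauss x) \<le> norm (\<Lambda> * gauss x)"
    proof (intro AE_I2)
      fix x
      have "\<bar>\<Lambda>\<bar> \<ge> f x" using up[of x] by linarith
      then show "norm (f x * gauss x) \<le> norm (\<Lambda> * gauss x)"
        using nn[of x] gauss_pos[of x] by (simp add: abs_mult mult_right_mono)
    qed
  qed
  show "I0 \<delta> R v0 \<le> mu_integral f"
    unfolding I0_def mu_integral_def
  proof (rule integral_mono[OF I0_integrable int])
    fix v :: "real^'n"
    show "\<delta> * indicator (ball v0 R) v * gauss v \<le> f v * gauss v"
      using low[of v] nn[of v] gauss_pos[of v]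
      by (auto simp: indicator_def dist_norm norm_minus_commute intro!: mult_right_mono)
  qed
  show "mu_integral f \<le> \<Lambda> * integral\<^sup>L lborel (gauss :: real^'n \<Rightarrow> real)"
  proof -
    have "(\<integral>v. f v * gauss v \<partial>lborel) \<le> (\<integral>v. \<Lambda> * gauss (v::real^'n) \<partial>lborel)"
    proof (rule Bochner_Integration.integral_mono[OF int])
      show "integrable lborel (\<lambda>v::real^'n. \<Lambda> * gauss v)" by (intro integrable_mult_right gauss_integrable)
      fix v :: "real^'n"
      show "f v * gauss v \<le> \<Lambda> * gauss v" using up[of v] gauss_pos[of v] by (simp add: mult_right_mono)
    qed
    then show ?thesis by (simp add: mu_integral_def)
  qed
qed

lemma grad_zero_min:
  fixes f :: "'a::real_inner \<Rightarrow> real"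
  assumes "(f has_derivative (\<lambda>w. g \<bullet> w)) (at x)" "eventually (\<lambda>y. f x \<le> f y) (at x)"
  shows "g = 0"
proof -
  have "(\<lambda>w. g \<bullet> w) = (\<lambda>h. 0)" by (rule has_derivative_local_min[OF assms])
  then have "g \<bullet> g = 0" by metis
  then show ?thesis by simp
qed

lemma time_left_min:
  fixes f :: "real \<Rightarrow> real"
  assumes d: "(f has_real_derivative d) (at s within S)" and sub: "{s - \<eta>..s} \<subseteq> S" and eta: "0 < \<eta>"
    and mn: "\<And>r. s - \<eta> \<le> r \<Longrightarrow> r < s \<Longrightarrow> f s \<le> f r"
  shows "d \<le> 0"
proof -
  have "(f has_real_derivative d) (at s within {s - \<eta>..s})" using d sub by (rule DERIV_subset)
  then have lim: "((\<lambda>y. (f y - f s) / (y - s)) \<longlongrightarrow> d) (at_left s)"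
    using eta by (simp add: has_field_derivative_iff at_within_Icc_at_left)
  have ev: "eventually (\<lambda>y. (f y - f s) / (y - s) \<le> 0) (at_left s)"
    using eventually_at_left_real[of "s - \<eta>" s] eta
  proof -
    have "eventually (\<lambda>y. y \<in> {s - \<eta><..<s}) (at_left s)"
      using eventually_at_left_real[of "s - \<eta>" s] eta by simp
    then show ?thesis
    proof (rule eventually_mono)
    fix y assume "y \<in> {s - \<eta><..<s}"
    then have "f s \<le> f y" "y - s < 0" using mn by auto
    then show "(f y - f s) / (y - s) \<le> 0" by (simp add: divide_nonneg_neg)
  qed
  qed
  show ?thesis by (rule tendsto_upperbound[OF lim ev]) simp
qed

lemma second_order_1d:
  fixes \<phi> g :: "real \<Rightarrow> real"
  assumes e: "0 < e" and der: "\<And>r. \<bar>r\<bar> < e \<Longrightarrow> (\<phi> has_real_derivative g r) (at r)"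
    and g0: "g 0 = 0" and dg: "(g has_real_derivative c) (at 0)"
    and mn: "\<And>r. \<bar>r\<bar> < e \<Longrightarrow> \<phi> 0 \<le> \<phi> r"
  shows "0 \<le> c"
proof (rule ccontr)
  assume "\<not> 0 \<le> c"
  then have c: "c < 0" by simp
  have "((\<lambda>y. (g y - g 0) / (y - 0)) \<longlongrightarrow> c) (at 0)"
    using dg by (simp add: has_field_derivative_iff)
  then have "((\<lambda>y. g y / y) \<longlongrightarrow> c) (at_right 0)"
    using g0 by (simp add: filterlim_at_split)
  then have "eventually (\<lambda>y. g y / y < 0) (at_right 0)"
    using c by (rule order_tendstoD)
  moreover have "eventually (\<lambda>y. y \<in> {0<..<e}) (at_right 0)" using e by (rule eventually_at_right_real)
  ultimately have evc: "eventually (\<lambda>y. g y / y < 0 \<and> y \<in> {0<..<e}) (at_right 0)"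
    by (rule eventually_conj)
  then obtain r where r: "0 < r" "r < e" and neg: "\<And>y. 0 < y \<Longrightarrow> y < r \<Longrightarrow> g y < 0"
  proof -
    assume *: "\<And>r. 0 < r \<Longrightarrow> r < e \<Longrightarrow> (\<And>y. 0 < y \<Longrightarrow> y < r \<Longrightarrow> g y < 0) \<Longrightarrow> thesis"
    from evc obtain b where b: "b > 0"
      and bb: "\<And>y. 0 < y \<Longrightarrow> y < b \<Longrightarrow> g y / y < 0 \<and> y \<in> {0<..<e}"
      unfolding eventually_at_right_field by auto
    define r where "r = min b (e/2)"
    have "0 < r" "r < e" using b e by (auto simp: r_def)
    moreover have "\<And>y. 0 < y \<Longrightarrow> y < r \<Longrightarrow> g y < 0"
    proof -
      fix y :: real assume "0 < y" "y < r"
      then have "g y / y < 0" using bb[of y] by (auto simp: r_def)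
      then show "g y < 0" using \<open>0 < y\<close> by (simp add: divide_less_0_iff)
    qed
    ultimately show thesis by (rule *)
  qed
  have "\<exists>z. 0 < z \<and> z < r \<and> \<phi> r - \<phi> 0 = (r - 0) * g z"
    by (rule MVT2[OF r(1)]) (use r in \<open>intro der, auto\<close>)
  then obtain z where z: "0 < z" "z < r" "\<phi> r - \<phi> 0 = r * g z" by auto
  have "r * g z < 0" using neg[OF z(1,2)] r by (simp add: mult_pos_neg)
  moreover have "\<phi> 0 \<le> \<phi> r" using mn[of r] r by simp
  ultimately show False using z(3) by simp
qed

lemma second_order_min:
  fixes f :: "real^'n \<Rightarrow> real" and F :: "real^'n \<Rightarrow> real^'n"
  assumes ev: "\<forall>\<^sub>F u in nhds v. (f has_derivative (\<lambda>w. F u \<bullet> w)) (at u)"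
    and dF: "(F has_derivative D) (at v)"
    and mn: "eventually (\<lambda>u. f v \<le> f u) (nhds v)"
  shows "F v = 0" and "0 \<le> (\<Sum>i\<in>UNIV. D (axis i 1) $ i)"
proof -
  from eventually_conj[OF ev mn] obtain e where e: "0 < e"
    and ee: "\<And>u. dist u v < e \<Longrightarrow> (f has_derivative (\<lambda>w. F u \<bullet> w)) (at u) \<and> f v \<le> f u"
    unfolding eventually_nhds_metric by (auto simp: dist_commute)
  have fv: "(f has_derivative (\<lambda>w. F v \<bullet> w)) (at v)" using ee[of v] e by simp
  have mnat: "eventually (\<lambda>u. f v \<le> f u) (at v)" using mn by (simp add: eventually_at_filter eventually_mono)
  show Fv: "F v = 0" by (rule grad_zero_min[OF fv mnat])
  have lin: "linear D" using dF by (rule has_derivative_linear)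
  have "0 \<le> D (axis i 1) $ i" for i
  proof -
    define a :: "real^'n" where "a = axis i 1"
    have na: "norm a = 1" by (simp add: a_def)
    define \<phi> where "\<phi> r = f (v + r *\<^sub>R a)" for r
    define g where "g r = F (v + r *\<^sub>R a) \<bullet> a" for r
    have path: "((\<lambda>r. v + r *\<^sub>R a) has_derivative (\<lambda>r. r *\<^sub>R a)) (at r)" for r :: real
      by (auto intro!: derivative_eq_intros)
    have der: "(\<phi> has_real_derivative g r) (at r)" if "\<bar>r\<bar> < e" for r
    proof -
      have "dist (v + r *\<^sub>R a) v < e" using that na by (simp add: dist_norm)
      then have fd: "(f has_derivative (\<lambda>w. F (v + r *\<^sub>R a) \<bullet> w)) (at (v + r *\<^sub>R a))" using ee by blast
      have "(\<phi> has_derivative (\<lambda>w. F (v + r *\<^sub>R a) \<bullet> (w *\<^sub>R a))) (at r)"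
        unfolding \<phi>_def using diff_chain_at[OF path fd] by (simp add: o_def)
      then show ?thesis
        by (simp add: has_field_derivative_def g_def mult.commute[of _ "F _ \<bullet> a"])
    qed
    have dg: "(g has_real_derivative D a \<bullet> a) (at 0)"
    proof -
      have "((\<lambda>r. v + r *\<^sub>R a) has_derivative (\<lambda>r. r *\<^sub>R a)) (at 0)" by (rule path)
      moreover have "(F has_derivative D) (at (v + 0 *\<^sub>R a))" using dF by simp
      ultimately have "((\<lambda>r. F (v + r *\<^sub>R a)) has_derivative (\<lambda>r. D (r *\<^sub>R a))) (at 0)"
        using diff_chain_at by (force simp: o_def)
      then have "(g has_derivative (\<lambda>r. D (r *\<^sub>R a) \<bullet> a)) (at 0)"
        unfolding g_def by (auto intro!: derivative_eq_intros)
      moreover have "(\<lambda>r. D (r *\<^sub>R a) \<bullet> a) = (\<lambda>r. (D a \<bullet> a) * r)"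
        using linear_scale[OF lin] by (auto simp: fun_eq_iff)
      ultimately show ?thesis by (simp add: has_field_derivative_def)
    qed
    have "0 \<le> D a \<bullet> a"
    proof (rule second_order_1d[OF e der _ dg])
      show "g 0 = 0" using Fv by (simp add: g_def)
      fix r :: real assume "\<bar>r\<bar> < e"
      then have "dist (v + r *\<^sub>R a) v < e" using na by (simp add: dist_norm)
      then show "\<phi> 0 \<le> \<phi> r" using ee by (simp add: \<phi>_def)
    qed simp
    then show ?thesis by (simp add: a_def inner_axis)
  qed
  then show "0 \<le> (\<Sum>i\<in>UNIV. D (axis i 1) $ i)" by (simp add: sum_nonneg)
qed

definition Fb :: "real \<Rightarrow> real \<Rightarrow> real \<Rightarrow> real \<Rightarrow> real \<Rightarrow> real \<Rightarrow> real^'n \<Rightarrow> real^'n \<Rightarrow> real \<Rightarrow> real^'n \<Rightarrow> real^'n \<Rightarrow> real" where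
  "Fb \<delta> K s0 \<rho>0 a0 \<sigma> x0 v0 s x v =
     \<delta> * exp (- K * (s - s0)) *
     exp (- ((v - v0) \<bullet> (v - v0) / (\<rho>0 + 4 * a0 * (s - s0)) + (x - x0 - s *\<^sub>R v0) \<bullet> (x - x0 - s *\<^sub>R v0) / \<sigma>))"

lemma dY:
  fixes x v0 :: "'a::real_inner"
  shows "((\<lambda>s. (x - s *\<^sub>R v0) \<bullet> (x - s *\<^sub>R v0)) has_real_derivative (- 2 * ((x - s *\<^sub>R v0) \<bullet> v0))) (at s)"
  unfolding has_field_derivative_def
  by (rule has_derivative_eq_rhs, (rule derivative_eq_intros refl)+)
     (auto simp: fun_eq_iff inner_commute algebra_simps)

lemma dY':
  fixes x x0 v0 :: "'a::real_inner"
  shows "((\<lambda>s. (x - x0 - s *\<^sub>R v0) \<bullet> (x - x0 - s *\<^sub>R v0)) has_real_derivative (- 2 * ((x - x0 - s *\<^sub>R v0) \<bullet> v0))) (at s)"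
  using dY[of "x - x0" v0 s] by simp

lemma Fb_ds:
  assumes "\<rho>0 + 4 * a0 * (s - s0) \<noteq> 0" "\<sigma> \<noteq> 0"
  shows "((\<lambda>s. Fb \<delta> K s0 \<rho>0 a0 \<sigma> x0 v0 s x v) has_real_derivative
     Fb \<delta> K s0 \<rho>0 a0 \<sigma> x0 v0 s x v * (- K + 4 * a0 * ((v - v0) \<bullet> (v - v0)) / (\<rho>0 + 4 * a0 * (s - s0))\<^sup>2
        + 2 * ((x - x0 - s *\<^sub>R v0) \<bullet> v0) / \<sigma>)) (at s)"
  unfolding Fb_def
  apply (rule derivative_eq_intros refl dY' | simp add: assms)+
  apply (simp add: field_simps power2_eq_square)
  done

lemma Fb_dx:
  assumes "\<sigma> \<noteq> 0"
  shows "((\<lambda>x. Fb \<delta> K s0 \<rho>0 a0 \<sigma> x0 v0 s x v) has_derivative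
     (\<lambda>w. ((- (2 * Fb \<delta> K s0 \<rho>0 a0 \<sigma> x0 v0 s x v / \<sigma>)) *\<^sub>R (x - x0 - s *\<^sub>R v0)) \<bullet> w)) (at x)"
  unfolding Fb_def
  apply (rule has_derivative_eq_rhs)
   apply (rule derivative_eq_intros refl | simp add: assms)+
  apply (simp add: fun_eq_iff field_simps inner_commute)
  done

lemma Fb_dv:
  assumes "\<rho>0 + 4 * a0 * (s - s0) \<noteq> 0"
  shows "((\<lambda>u. Fb \<delta> K s0 \<rho>0 a0 \<sigma> x0 v0 s x u) has_derivative
     (\<lambda>w. ((- (2 * Fb \<delta> K s0 \<rho>0 a0 \<sigma> x0 v0 s x u / (\<rho>0 + 4 * a0 * (s - s0)))) *\<^sub>R (u - v0)) \<bullet> w)) (at u)"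
  unfolding Fb_def
  apply (rule has_derivative_eq_rhs)
   apply (rule derivative_eq_intros refl | simp add: assms)+
  apply (simp add: fun_eq_iff field_simps inner_commute)
  done

lemma Fb_dvv:
  assumes r: "\<rho> = \<rho>0 + 4 * a0 * (s - s0)" and "\<rho> \<noteq> 0"
  shows "((\<lambda>u. (- (2 * Fb \<delta> K s0 \<rho>0 a0 \<sigma> x0 v0 s x u / \<rho>)) *\<^sub>R (u - v0)) has_derivative
     (\<lambda>w. (- (2 * Fb \<delta> K s0 \<rho>0 a0 \<sigma> x0 v0 s x v / \<rho>)) *\<^sub>R w +
         (- (2 * ((((- (2 * Fb \<delta> K s0 \<rho>0 a0 \<sigma> x0 v0 s x v / \<rho>)) *\<^sub>R (v - v0)) \<bullet> w)) / \<rho>)) *\<^sub>R (v - v0))) (at v)"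
proof -
  have d: "((\<lambda>u. Fb \<delta> K s0 \<rho>0 a0 \<sigma> x0 v0 s x u) has_derivative
     (\<lambda>w. ((- (2 * Fb \<delta> K s0 \<rho>0 a0 \<sigma> x0 v0 s x v / \<rho>)) *\<^sub>R (v - v0)) \<bullet> w)) (at v)"
    using Fb_dv[of \<rho>0 a0 s s0] assms by simp
  show ?thesis
    apply (rule has_derivative_eq_rhs)
     apply (rule derivative_eq_intros refl d | simp add: assms(2))+
    done
qed

lemma trace_DF:
  fixes w :: "real^'n"
  shows "(\<Sum>i\<in>UNIV. (c *\<^sub>R axis i 1 + (- (2 * ((c *\<^sub>R w) \<bullet> axis i 1) / \<rho>)) *\<^sub>R w) $ i)
     = real CARD('n) * c - 2 * c / \<rho> * (w \<bullet> w)"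
proof -
  have "(\<Sum>i\<in>UNIV. (c *\<^sub>R axis i 1 + (- (2 * ((c *\<^sub>R w) \<bullet> axis i 1) / \<rho>)) *\<^sub>R w) $ i)
      = (\<Sum>i\<in>UNIV. c - 2 * c / \<rho> * (w $ i * w $ i))"
    by (rule sum.cong) (simp_all add: inner_axis axis_nth)
  also have "\<dots> = real CARD('n) * c - 2 * c / \<rho> * (\<Sum>i\<in>UNIV. w $ i * w $ i)"
    by (simp add: sum_subtractf sum_distrib_left)
  also have "(\<Sum>i\<in>UNIV. w $ i * w $ i) = w \<bullet> w" by (simp add: inner_vec_def)
  finally show ?thesis .
qed

lemma amgm_wy:
  fixes nw ny \<rho> \<sigma> S :: real
  assumes "0 < \<rho>" "0 < \<sigma>" "0 < S"
  shows "2 * nw * ny / \<sigma> \<le> nw\<^sup>2 * S / \<rho> + ny\<^sup>2 * \<rho> / (\<sigma>\<^sup>2 * S)"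
proof -
  have "0 \<le> (nw * S * \<sigma> - ny * \<rho>)\<^sup>2" by simp
  then have "2 * nw * ny * \<sigma> * \<rho> * S \<le> nw\<^sup>2 * S\<^sup>2 * \<sigma>\<^sup>2 + ny\<^sup>2 * \<rho>\<^sup>2"
    by (simp add: power2_eq_square algebra_simps)
  then show ?thesis using assms
    by (simp add: field_simps power2_eq_square)
qed

lemma sub_ineq:
  fixes a a0 a1 \<rho> \<rho>0 \<sigma> S M0 N Y nw ny wy vw nv0 n K :: real
  assumes a: "0 < a0" "a0 \<le> a" "a \<le> a1"
    and r: "0 < \<rho>0" "\<rho>0 \<le> \<rho>" "0 < \<sigma>" "0 < S" "\<rho> \<le> \<sigma> * S\<^sup>2"
    and N: "N = nw\<^sup>2" "Y = ny\<^sup>2" "0 \<le> nw" "0 \<le> ny" "N / \<rho> + Y / \<sigma> < M0"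
    and wy: "\<bar>wy\<bar> \<le> nw * ny" and vw: "N - nv0 * nw \<le> vw" and n: "0 \<le> nv0" "0 \<le> n"
    and K: "K = 2 * M0 * S + a1 * (2 * n + nv0\<^sup>2) / \<rho>0 + 1"
  shows "- K + 4 * a0 * N / \<rho>\<^sup>2 - 2 * wy / \<sigma> < a * (- 2 * n / \<rho> + 4 * N / \<rho>\<^sup>2 + 2 * vw / \<rho>)"
proof -
  have rho: "0 < \<rho>" using r by simp
  have N0: "0 \<le> N / \<rho>" "0 \<le> Y / \<sigma>" using N rho r by auto
  then have NM: "N / \<rho> \<le> M0" "Y / \<sigma> \<le> M0" using N by auto
  have "- 2 * wy / \<sigma> \<le> 2 * nw * ny / \<sigma>"
  proof -
    have "- 2 * wy \<le> 2 * nw * ny" using wy by linarith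
    then show ?thesis using r by (intro divide_right_mono) auto
  qed
  also have "\<dots> \<le> nw\<^sup>2 * S / \<rho> + ny\<^sup>2 * \<rho> / (\<sigma>\<^sup>2 * S)" by (rule amgm_wy) (use r rho in auto)
  also have "nw\<^sup>2 * S / \<rho> = (N / \<rho>) * S" using N by simp
  also have "\<dots> \<le> M0 * S" using NM r by (intro mult_right_mono) auto
  also have "ny\<^sup>2 * \<rho> / (\<sigma>\<^sup>2 * S) = (Y / \<sigma>) * (\<rho> / (\<sigma> * S))" using N by (simp add: power2_eq_square)
  also have "\<rho> / (\<sigma> * S) \<le> S" using r by (simp add: divide_le_eq power2_eq_square mult_ac)
  then have "(Y / \<sigma>) * (\<rho> / (\<sigma> * S)) \<le> M0 * S"
    using NM N0 r by (meson mult_mono order_trans divide_nonneg_pos less_imp_le mult_pos_pos)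
  finally have wyb: "- 2 * wy / \<sigma> \<le> 2 * M0 * S" by simp
  have sq: "0 \<le> (nv0 - nw)\<^sup>2" by simp
  have "2 * nv0 * nw \<le> nv0\<^sup>2 + N" using sq N(1) unfolding power2_eq_square by (simp add: algebra_simps)
  moreover have "0 \<le> N" using N(1) by simp
  ultimately have vw2: "- nv0\<^sup>2 \<le> 2 * vw" using vw by linarith
  have t1: "a0 * (4 * N / \<rho>\<^sup>2) \<le> a * (4 * N / \<rho>\<^sup>2)"
    using a N by (intro mult_right_mono) auto
  have "a * ((2 * n + nv0\<^sup>2) / \<rho>) \<le> a1 * ((2 * n + nv0\<^sup>2) / \<rho>0)"
  proof (rule mult_mono)
    show "(2 * n + nv0\<^sup>2) / \<rho> \<le> (2 * n + nv0\<^sup>2) / \<rho>0"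
      using r n by (intro divide_left_mono) auto
  qed (use a r n in auto)
  moreover have "a * (- 2 * n / \<rho> + 4 * N / \<rho>\<^sup>2 + 2 * vw / \<rho>) \<ge>
      a * (4 * N / \<rho>\<^sup>2) - a * ((2 * n + nv0\<^sup>2) / \<rho>)"
  proof -
    have "- 2 * n / \<rho> + 2 * vw / \<rho> \<ge> - ((2 * n + nv0\<^sup>2) / \<rho>)"
      using vw2 rho by (simp add: field_simps)
    then have "a * (- 2 * n / \<rho> + 2 * vw / \<rho>) \<ge> a * (- ((2 * n + nv0\<^sup>2) / \<rho>))"
      using a by (intro mult_left_mono) auto
    then show ?thesis by (simp add: algebra_simps)
  qed
  ultimately show ?thesis using t1 wyb K by (simp add: algebra_simps)
qed

lemma target_bound:
  fixes a0 a1 c1 \<kappa> R \<delta> V cc Nt Yt :: real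
  assumes c: "0 < a0" "0 < R" "0 < c1" "c1 \<le> 1" "(2 + 4/R) * c1 \<le> 1/16"
           "a1 * cc * c1 \<le> R^2/16" "\<kappa> = (2/a0)/c1" "16 \<le> \<kappa>" "1 \<le> V" "0 \<le> a1" "0 \<le> cc"
    and N: "0 \<le> Nt" "Nt \<le> V^2" and Y: "0 \<le> Yt" "Yt < (R/2)^2"
  assumes \<tau>_def: "\<tau> = c1 / V" and M0_def: "M0 = \<kappa> * V^3"
  and S_def: "S = (2 + 4/R) * V" and \<sigma>_def: "\<sigma> = R^2 / (2 * M0)" and \<rho>0_def: "\<rho>0 = R^2 / M0"
  and K_def: "K = 2 * M0 * S + a1 * cc / \<rho>0 + 1"
  shows "K * \<tau> + Nt / (\<rho>0 + 4 * a0 * \<tau>) + Yt / \<sigma> \<le> M0 - 1"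
proof -
  have V0: "0 < V" using c by simp
  have V3: "1 \<le> V^3" using c by simp
  have M0: "16 \<le> M0"
  proof -
    have "\<kappa> * 1 \<le> \<kappa> * V^3" using c V3 by (intro mult_left_mono) auto
    then show ?thesis unfolding M0_def using c by simp
  qed
  have Mpos: "0 < M0" using M0 by simp
  have tau: "0 < \<tau>" "\<tau> \<le> 1" using c V0 unfolding \<tau>_def by (auto simp: divide_le_eq)
  have M0eq: "M0 = 2 * V^3 / (a0 * c1)" unfolding M0_def c(7) by simp
  have tM: "\<tau> * M0 = 2 * V^2 / a0" unfolding \<tau>_def M0eq using c V0 by (simp add: field_simps power3_eq_cube power2_eq_square)
  have "K * \<tau> = 2 * M0 * (S * \<tau>) + a1 * cc * \<tau> * M0 / R^2 + \<tau>"
    unfolding K_def \<rho>0_def using Mpos c by (simp add: field_simps)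
  also have "S * \<tau> = (2 + 4/R) * c1" unfolding S_def \<tau>_def using V0 by simp
  also have "a1 * cc * \<tau> * M0 / R^2 \<le> M0 / 16"
  proof -
    have "a1 * cc * \<tau> \<le> a1 * cc * c1" using tau c V0 unfolding \<tau>_def
      by (intro mult_left_mono) (auto simp: divide_le_eq)
    also have "\<dots> \<le> R^2/16" using c by simp
    finally have "a1 * cc * \<tau> * M0 \<le> R^2/16 * M0" using Mpos by (intro mult_right_mono) auto
    then show ?thesis using c by (simp add: field_simps)
  qed
  finally have K1: "K * \<tau> \<le> 2 * M0 * ((2 + 4 / R) * c1) + M0/16 + 1" using tau by simp
  have "2 * M0 * ((2 + 4 / R) * c1) \<le> 2 * M0 * (1/16)" using c Mpos by (intro mult_left_mono) auto
  with K1 have Kt: "K * \<tau> \<le> M0/8 + M0/16 + 1" by simp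
  have "Nt / (\<rho>0 + 4 * a0 * \<tau>) \<le> V^2 / (4 * a0 * \<tau>)"
  proof (rule frac_le)
    show "0 < 4 * a0 * \<tau>" using c tau by simp
    show "4 * a0 * \<tau> \<le> \<rho>0 + 4 * a0 * \<tau>" unfolding \<rho>0_def using Mpos by simp
  qed (use N in auto)
  also have "V^2 / (4 * a0 * \<tau>) = M0 / 8"
    using tM c tau Mpos by (simp add: field_simps)
  finally have Nb: "Nt / (\<rho>0 + 4 * a0 * \<tau>) \<le> M0 / 8" .
  have "Yt / \<sigma> < (R/2)^2 / \<sigma>" using Y c Mpos unfolding \<sigma>_def by (intro divide_strict_right_mono) auto
  also have "(R/2)^2 / \<sigma> = M0 / 2" unfolding \<sigma>_def using c by (simp add: field_simps power2_eq_square)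
  finally have Yb: "Yt / \<sigma> < M0 / 2" .
  show ?thesis using Kt Nb Yb M0 by simp
qed

lemma param_facts:
  fixes a0 a1 c1 \<kappa> R V :: real
  assumes c: "0 < a0" "0 < R" "0 < c1" "\<kappa> = (2/a0)/c1" "16 \<le> \<kappa>" "1 \<le> V"
  assumes \<tau>_def: "\<tau> = c1 / V" and M0_def: "M0 = \<kappa> * V^3"
  and S_def: "S = (2 + 4/R) * V" and \<sigma>_def: "\<sigma> = R^2 / (2 * M0)" and \<rho>0_def: "\<rho>0 = R^2 / M0"
  shows "\<rho>0 + 4 * a0 * \<tau> \<le> \<sigma> * S^2" "M0 * (\<rho>0 + 4 * a0 * \<tau>) = R^2 + 8 * V^2"
    "M0 * \<sigma> = R^2 / 2" "M0 * \<rho>0 = R^2" "0 < M0"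
proof -
  have V0: "0 < V" using c by simp
  have V3: "1 \<le> V^3" using c by simp
  have "\<kappa> * 1 \<le> \<kappa> * V^3" using c V3 by (intro mult_left_mono) auto
  then have Mpos: "0 < M0" unfolding M0_def using c by simp
  then show "0 < M0" .
  have M0eq: "M0 = 2 * V^3 / (a0 * c1)" unfolding M0_def c(4) by simp
  have tM: "\<tau> * M0 = 2 * V^2 / a0" unfolding \<tau>_def M0eq using c V0 by (simp add: field_simps power3_eq_cube power2_eq_square)
  show "M0 * (\<rho>0 + 4 * a0 * \<tau>) = R^2 + 8 * V^2"
    using tM Mpos c unfolding \<rho>0_def by (simp add: field_simps)
  show "M0 * \<sigma> = R^2 / 2" "M0 * \<rho>0 = R^2" unfolding \<sigma>_def \<rho>0_def using Mpos by auto
  have "M0 * (\<sigma> * S^2) = R^2 / 2 * (2 + 4/R)^2 * V^2"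
    unfolding \<sigma>_def S_def using Mpos by (simp add: field_simps power2_eq_square)
  also have "(2 + 4/R)^2 = 4 + 16/R + 16/R^2" using c by (simp add: field_simps power2_eq_square)
  also have "R^2 / 2 * (4 + 16/R + 16/R^2) * V^2 = (2*R^2 + 8*R + 8) * V^2"
    using c by (simp add: field_simps power2_eq_square)
  also have "\<dots> \<ge> R^2 + 8 * V^2"
  proof -
    have "V^2 \<ge> 1" using c by simp
    then have "(2*R^2 + 8*R + 8) * V^2 \<ge> (2*R^2) * 1 + 8 * V^2 + 8 * R * V^2"
      using c by (simp add: algebra_simps mult_left_mono)
    moreover have "0 \<le> 8 * R * V^2" using c by simp
    moreover have "2*R^2 \<ge> R^2" by simp
    ultimately show ?thesis by linarith
  qed
  finally have "M0 * (\<rho>0 + 4 * a0 * \<tau>) \<le> M0 * (\<sigma> * S^2)"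
    using \<open>M0 * (\<rho>0 + 4 * a0 * \<tau>) = R^2 + 8 * V^2\<close> by simp
  then show "\<rho>0 + 4 * a0 * \<tau> \<le> \<sigma> * S^2" using Mpos by simp
qed

lemma alg1: "\<sigma> \<noteq> 0 \<Longrightarrow> F * (- K + X + 2 * B / \<sigma>) + (- (2 * F / \<sigma>)) * A = F * (- K + X - 2 * (A - B) / \<sigma>)"
  for \<sigma> F K X B A :: real
  by (simp add: field_simps)

lemma alg2: "\<rho> \<noteq> 0 \<Longrightarrow> n * (- (2 * F / \<rho>)) - 2 * (- (2 * F / \<rho>)) / \<rho> * N - (- (2 * F / \<rho>)) * W
   = F * (- 2 * n / \<rho> + 4 * N / \<rho>^2 + 2 * W / \<rho>)"
  for \<rho> F n N W :: real
  by (simp add: field_simps power2_eq_square)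

lemma barrier:
  fixes h :: "real \<Rightarrow> real^'n \<Rightarrow> real^'n \<Rightarrow> real" and x0 v0 xt vt :: "real^'n"
  assumes sol: "classical_solution \<beta> T h"
    and low: "\<And>s x v. s \<in> {0..T} \<Longrightarrow> norm (x - (x0 + s *\<^sub>R v0)) < R \<Longrightarrow> norm (v - v0) < R \<Longrightarrow> \<delta> \<le> h s x v"
    and coef: "\<And>s x. s \<in> {0<..T} \<Longrightarrow> norm (x - (x0 + s *\<^sub>R v0)) < R \<Longrightarrow> a0 \<le> Rcoef \<beta> h s x \<and> Rcoef \<beta> h s x \<le> a1"
    and c: "0 < a0" "a0 \<le> a1" "0 < \<delta>" "0 < R" "0 < c1" "c1 \<le> 1" "(2 + 4/R) * c1 \<le> 1/16"
           "a1 * (2 * real CARD('n) + (norm v0)^2) * c1 \<le> R^2/16" "\<kappa> = (2/a0)/c1" "16 \<le> \<kappa>"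
    and t: "c1 \<le> t" "t \<le> T"
    and xt: "norm (xt - (x0 + t *\<^sub>R v0)) < R/2"
  shows "\<delta> * exp (- (\<kappa> * (norm vt + norm v0 + 1)^3)) \<le> h t xt vt"
proof -
  define V where "V = norm vt + norm v0 + 1"
  have V1: "1 \<le> V" unfolding V_def by simp
  define \<tau> where "\<tau> = c1 / V"
  define M0 where "M0 = \<kappa> * V^3"
  define S where "S = (2 + 4/R) * V"
  define \<sigma> where "\<sigma> = R^2 / (2 * M0)"
  define \<rho>0 where "\<rho>0 = R^2 / M0"
  define cc where "cc = 2 * real CARD('n) + (norm v0)^2"
  define K where "K = 2 * M0 * S + a1 * cc / \<rho>0 + 1"
  define s0 where "s0 = t - \<tau>"
  define \<rho> where "\<rho> s = \<rho>0 + 4 * a0 * (s - s0)" for s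
  define F where "F s x v = Fb \<delta> K s0 \<rho>0 a0 \<sigma> x0 v0 s x v" for s x v
  define \<psi> where "\<psi> s x v = F s x v - \<delta> * exp (- M0)" for s x v
  define Rv where "Rv = R + 3 * V"
  define D where "D = {(s, x, v). s0 \<le> s \<and> s \<le> t \<and> norm (x - (x0 + s *\<^sub>R v0)) \<le> R \<and> norm (v - v0) \<le> Rv}"
  note pf = param_facts[OF c(1,4,5,9,10) V1 \<tau>_def M0_def S_def \<sigma>_def \<rho>0_def]
  have Mpos: "0 < M0" by (rule pf(5))
  have V0: "0 < V" using V1 by simp
  have tau: "0 < \<tau>" "\<tau> \<le> c1" using c V1 unfolding \<tau>_def by (auto simp: divide_le_eq)
  have s0: "0 \<le> s0" "s0 < t" using tau t unfolding s0_def by auto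
  have sig: "0 < \<sigma>" unfolding \<sigma>_def using Mpos c by simp
  have rho0: "0 < \<rho>0" unfolding \<rho>0_def using Mpos c by simp
  have Spos: "0 < S" unfolding S_def using c(4) V0 by (intro mult_pos_pos add_pos_pos) auto
  have rho_lo: "\<rho>0 \<le> \<rho> s" if "s0 \<le> s" for s using that c unfolding \<rho>_def by simp
  have rho_hi: "\<rho> s \<le> \<rho>0 + 4 * a0 * \<tau>" if "s \<le> t" for s using that c unfolding \<rho>_def s0_def by simp
  have Fpos: "0 < F s x v" for s x v unfolding F_def Fb_def using c by simp
  have target: "\<delta> * exp (- M0) \<le> \<psi> t xt vt"
  proof -
    define Nt where "Nt = (vt - v0) \<bullet> (vt - v0)"
    define Yt where "Yt = (xt - x0 - t *\<^sub>R v0) \<bullet> (xt - x0 - t *\<^sub>R v0)"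
    have Nt: "0 \<le> Nt" "Nt \<le> V^2"
    proof -
      have "norm (vt - v0) \<le> V" unfolding V_def using norm_triangle_ineq4[of vt v0] by simp
      then have "(norm (vt - v0))^2 \<le> V^2" by (intro power_mono) auto
      then show "0 \<le> Nt" "Nt \<le> V^2" unfolding Nt_def by (auto simp: power2_norm_eq_inner)
    qed
    have Yt: "0 \<le> Yt" "Yt < (R/2)^2"
    proof -
      have "norm (xt - x0 - t *\<^sub>R v0) < R/2" using xt by (simp add: algebra_simps)
      then have "(norm (xt - x0 - t *\<^sub>R v0))^2 < (R/2)^2" by (intro power_strict_mono) auto
      then show "0 \<le> Yt" "Yt < (R/2)^2" unfolding Yt_def by (auto simp: power2_norm_eq_inner)
    qed
    have a1: "0 \<le> a1" using c by simp
    have cc: "0 \<le> cc" unfolding cc_def by simp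
    have tb: "K * \<tau> + Nt / (\<rho>0 + 4 * a0 * \<tau>) + Yt / \<sigma> \<le> M0 - 1"
      by (rule target_bound[OF c(1,4,5,6,7) _ c(9,10) V1 a1 cc Nt Yt \<tau>_def M0_def S_def \<sigma>_def \<rho>0_def K_def])
         (use c(8) in \<open>simp add: cc_def\<close>)
    have rt: "\<rho>0 + 4 * a0 * (t - s0) = \<rho>0 + 4 * a0 * \<tau>" unfolding s0_def by simp
    have ts: "t - s0 = \<tau>" unfolding s0_def by simp
    have "F t xt vt = \<delta> * (exp (- K * \<tau>) * exp (- (Nt / (\<rho>0 + 4 * a0 * \<tau>) + Yt / \<sigma>)))"
      unfolding F_def Fb_def ts Nt_def Yt_def by simp
    also have "exp (- K * \<tau>) * exp (- (Nt / (\<rho>0 + 4 * a0 * \<tau>) + Yt / \<sigma>))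
       = exp (- (K * \<tau> + Nt / (\<rho>0 + 4 * a0 * \<tau>) + Yt / \<sigma>))"
      by (simp only: exp_add[symmetric]) (simp add: algebra_simps)
    finally have Feq: "F t xt vt = \<delta> * exp (- (K * \<tau> + Nt / (\<rho>0 + 4 * a0 * \<tau>) + Yt / \<sigma>))" .
    have "\<delta> * exp (- (M0 - 1)) \<le> \<delta> * exp (- (K * \<tau> + Nt / (\<rho>0 + 4 * a0 * \<tau>) + Yt / \<sigma>))"
      by (intro mult_left_mono) (use tb c in auto)
    then have "\<delta> * exp (- (M0 - 1)) \<le> F t xt vt" using Feq by (simp only:)
    moreover have "\<delta> * exp (- (M0 - 1)) = \<delta> * exp (- M0) * exp 1" by (simp add: exp_add[symmetric])
    moreover have "exp (1::real) \<ge> 2" using exp_ge_add_one_self[of 1] by simp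
    moreover have "0 < \<delta> * exp (- M0)" using c by simp
    ultimately have "2 * (\<delta> * exp (- M0)) \<le> F t xt vt"
    proof -
      have "2 * (\<delta> * exp (- M0)) \<le> exp 1 * (\<delta> * exp (- M0))"
        using \<open>exp 1 \<ge> 2\<close> \<open>0 < \<delta> * exp (- M0)\<close> by (intro mult_right_mono) auto
      also have "\<dots> = \<delta> * exp (- (M0 - 1))" using \<open>\<delta> * exp (- (M0 - 1)) = \<delta> * exp (- M0) * exp 1\<close> by (simp only: mult.commute)
      finally show ?thesis using \<open>\<delta> * exp (- (M0 - 1)) \<le> F t xt vt\<close> by linarith
    qed
    then show ?thesis unfolding \<psi>_def by simp
  qed
  have main: "\<psi> t xt vt \<le> h t xt vt"
  proof (rule ccontr)
    assume "\<not> \<psi> t xt vt \<le> h t xt vt"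
    then have neg: "h t xt vt - \<psi> t xt vt < 0" by simp
    define w where "w = (\<lambda>(s, x, v). h s x v - \<psi> s x v)"
    note sol' = sol[unfolded classical_solution_def]
    have hnn: "\<forall>t\<in>{0..T}. \<forall>x v. 0 \<le> h t x v" using sol' by (rule conjunct2[THEN conjunct1])
    have hcont: "continuous_on ({0..T} \<times> UNIV \<times> UNIV) (\<lambda>(t, x, v). h t x v)"
      using sol' by (rule conjunct2[THEN conjunct2, THEN conjunct1])
    note pde = sol'[THEN conjunct2, THEN conjunct2, THEN conjunct2]
    have Rv: "V \<le> Rv" unfolding Rv_def using c V0 by simp
    have tD: "(t, xt, vt) \<in> D"
    proof -
      have "norm (vt - v0) \<le> V" unfolding V_def using norm_triangle_ineq4[of vt v0] by simp
      moreover have "norm (xt - (x0 + t *\<^sub>R v0)) \<le> R" using xt norm_ge_zero[of "xt - (x0 + t *\<^sub>R v0)"] by linarith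
      ultimately show ?thesis unfolding D_def using s0 Rv by auto
    qed
    have DT: "D \<subseteq> {0..T} \<times> UNIV \<times> UNIV" unfolding D_def using s0 t by auto
    have "closed D"
    proof -
      have "D = {p. s0 \<le> fst p} \<inter> {p. fst p \<le> t} \<inter> {p. norm (fst (snd p) - (x0 + fst p *\<^sub>R v0)) \<le> R}
               \<inter> {p. norm (snd (snd p) - v0) \<le> Rv}"
        unfolding D_def by auto
      also have "closed \<dots>"
        by (intro closed_Int closed_Collect_le continuous_intros)
      finally show ?thesis .
    qed
    moreover have "bounded D"
    proof (rule bounded_subset)
      show "bounded ({s0..t} \<times> cball x0 (R + t * norm v0) \<times> cball v0 Rv)"
        by (intro bounded_Times) auto
      show "D \<subseteq> {s0..t} \<times> cball x0 (R + t * norm v0) \<times> cball v0 Rv"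
      proof safe
        fix s x v assume "(s, x, v) \<in> D"
        then have sx: "s0 \<le> s" "s \<le> t" "norm (x - (x0 + s *\<^sub>R v0)) \<le> R" "norm (v - v0) \<le> Rv"
          unfolding D_def by auto
        have "norm (x0 - x) \<le> norm (x - (x0 + s *\<^sub>R v0)) + norm (s *\<^sub>R v0)"
          using norm_triangle_ineq[of "x - (x0 + s *\<^sub>R v0)" "s *\<^sub>R v0"]
          by (simp add: norm_minus_commute algebra_simps)
        also have "norm (s *\<^sub>R v0) \<le> t * norm v0" using sx s0 by (simp add: mult_right_mono)
        finally show "x \<in> cball x0 (R + t * norm v0)" using sx by (simp add: dist_norm)
        show "s \<in> {s0..t}" "v \<in> cball v0 Rv" using sx by (auto simp: dist_norm norm_minus_commute)
      qed
    qed
    ultimately have cD: "compact D" by (simp add: compact_eq_bounded_closed)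
    have rne: "\<rho>0 + 4 * a0 * (fst p - s0) \<noteq> 0" if "p \<in> D" for p
    proof -
      have "s0 \<le> fst p" using that unfolding D_def by auto
      then have "0 \<le> 4 * a0 * (fst p - s0)" using c by simp
      then show ?thesis using rho0 by linarith
    qed
    have wcont: "continuous_on D w"
    proof -
      have h1: "continuous_on D (\<lambda>(t, x, v). h t x v)" by (rule continuous_on_subset[OF hcont DT])
      have h2: "continuous_on D (\<lambda>p. \<psi> (fst p) (fst (snd p)) (snd (snd p)))"
        unfolding \<psi>_def F_def Fb_def
        by (intro continuous_intros) (use rne sig in auto)
      have "continuous_on D (\<lambda>p. (\<lambda>(t, x, v). h t x v) p - \<psi> (fst p) (fst (snd p)) (snd (snd p)))"
        by (intro continuous_on_diff h1 h2)
      then show ?thesis unfolding w_def by (simp add: case_prod_unfold)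
    qed
    obtain p where pD: "p \<in> D" and pmin: "\<And>q. q \<in> D \<Longrightarrow> w p \<le> w q"
      using continuous_attains_inf[OF cD _ wcont] tD by blast
    obtain s1 x1 v1 where p: "p = (s1, x1, v1)" by (cases p) auto
    have s1: "s0 \<le> s1" "s1 \<le> t" and x1D: "norm (x1 - (x0 + s1 *\<^sub>R v0)) \<le> R" and v1D: "norm (v1 - v0) \<le> Rv"
      using pD unfolding p D_def by auto
    have wmin: "\<And>s x v. (s, x, v) \<in> D \<Longrightarrow> h s1 x1 v1 - \<psi> s1 x1 v1 \<le> h s x v - \<psi> s x v"
      using pmin unfolding p w_def by fastforce
    have wneg: "h s1 x1 v1 - \<psi> s1 x1 v1 < 0" using wmin[OF tD] neg by simp
    have s1T: "s1 \<in> {0..T}" using s1 s0 t by auto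
    have "0 \<le> h s1 x1 v1" using hnn s1T by blast
    then have Fbig: "\<delta> * exp (- M0) < F s1 x1 v1" using wneg unfolding \<psi>_def by simp
    define y1 where "y1 = x1 - x0 - s1 *\<^sub>R v0"
    define w1 where "w1 = v1 - v0"
    define N1 where "N1 = w1 \<bullet> w1"
    define Y1 where "Y1 = y1 \<bullet> y1"
    define \<rho>1 where "\<rho>1 = \<rho> s1"
    define F1 where "F1 = F s1 x1 v1"
    have y1n: "norm (x1 - (x0 + s1 *\<^sub>R v0)) = norm y1" unfolding y1_def by (simp add: algebra_simps)
    have rho1: "\<rho>0 \<le> \<rho>1" "\<rho>1 \<le> \<sigma> * S^2" "0 < \<rho>1"
      using rho_lo[OF s1(1)] rho_hi[OF s1(2)] pf(1) rho0 unfolding \<rho>1_def by auto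
    have Kpos: "0 \<le> K" unfolding K_def cc_def using Mpos Spos c rho0 by (intro add_nonneg_nonneg) auto
    have F1eq: "F1 = \<delta> * exp (- K * (s1 - s0)) * exp (- (N1 / \<rho>1 + Y1 / \<sigma>))"
      unfolding F1_def F_def Fb_def N1_def Y1_def w1_def y1_def \<rho>1_def \<rho>_def by simp
    have e1: "exp (- K * (s1 - s0)) \<le> 1" using Kpos s1 by (simp add: mult_nonneg_nonneg)
    have N1nn: "0 \<le> N1 / \<rho>1" "0 \<le> Y1 / \<sigma>" unfolding N1_def Y1_def using rho1 sig by auto
    have QM: "N1 / \<rho>1 + Y1 / \<sigma> < M0"
    proof -
      have "\<delta> * exp (- K * (s1 - s0)) \<le> \<delta> * 1" using e1 c by (intro mult_left_mono) auto
      then have "\<delta> * exp (- K * (s1 - s0)) * exp (- (N1 / \<rho>1 + Y1 / \<sigma>)) \<le> \<delta> * 1 * exp (- (N1 / \<rho>1 + Y1 / \<sigma>))"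
        by (intro mult_right_mono) auto
      then have "F1 \<le> \<delta> * exp (- (N1 / \<rho>1 + Y1 / \<sigma>))" using F1eq by simp
      then have "\<delta> * exp (- M0) < \<delta> * exp (- (N1 / \<rho>1 + Y1 / \<sigma>))" using Fbig unfolding F1_def by simp
      then show ?thesis using c by simp
    qed
    have Y1b: "Y1 < R^2" 
    proof -
      have "Y1 / \<sigma> < M0" using QM N1nn by linarith
      then have "Y1 < M0 * \<sigma>" using pos_divide_less_eq[OF sig] by simp
      moreover have "0 < R^2" using c(4) by simp
      ultimately show ?thesis using pf(3) by linarith
    qed
    have ny1: "norm y1 < R"
    proof -
      have "(norm y1)^2 < R^2" using Y1b unfolding Y1_def by (simp add: power2_norm_eq_inner)
      then show ?thesis by (rule power_less_imp_less_base[OF _ less_imp_le[OF c(4)]])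
    qed
    have N1b: "N1 < M0 * \<rho>1"
    proof -
      have "N1 / \<rho>1 < M0" using QM N1nn by linarith
      then show ?thesis using pos_divide_less_eq[OF rho1(3)] by simp
    qed
    have nw1: "norm w1 < Rv"
    proof -
      have "M0 * \<rho>1 \<le> M0 * (\<rho>0 + 4 * a0 * \<tau>)" using rho_hi[OF s1(2)] Mpos unfolding \<rho>1_def by simp
      then have "N1 < R^2 + 8 * V^2" using N1b pf(2) by simp
      also have "\<dots> \<le> Rv^2" unfolding Rv_def using c V0 by (simp add: power2_eq_square algebra_simps)
      finally have "(norm w1)^2 < Rv^2" unfolding N1_def by (simp add: power2_norm_eq_inner)
      moreover have "0 \<le> Rv" unfolding Rv_def using c V0 by simp
      ultimately show ?thesis by (rule power_less_imp_less_base)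
    qed
    show False
    proof (cases "s1 = s0")
      case True
      then have "\<rho>1 = \<rho>0" unfolding \<rho>1_def \<rho>_def by simp
      then have "N1 < R^2" using N1b pf(4) by simp
      then have "norm w1 < R" unfolding N1_def using c
        by (metis power2_norm_eq_inner norm_ge_zero power_less_imp_less_base less_imp_le)
      then have "\<delta> \<le> h s1 x1 v1" using low[OF s1T] ny1 y1n unfolding w1_def by simp
      moreover have "F1 \<le> \<delta>"
      proof -
        have "exp (- (N1 / \<rho>1 + Y1 / \<sigma>)) \<le> 1" using N1nn by simp
        then show ?thesis unfolding F1eq True using c by simp
      qed
      ultimately show False using wneg c unfolding \<psi>_def F1_def by (smt (verit) exp_gt_zero mult_pos_pos)
    next
      case False
      then have s1pos: "s1 \<in> {0<..T}" using s1 s0 t by auto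
      obtain ht gx G Dg where
        dht: "((\<lambda>s. h s x1 v1) has_real_derivative ht) (at s1 within {0..T})"
        and dgx: "((\<lambda>y. h s1 y v1) has_derivative (\<lambda>w. gx \<bullet> w)) (at x1)"
        and dG: "\<forall>\<^sub>F u in nhds v1. ((\<lambda>u'. h s1 x1 u') has_derivative (\<lambda>w. G u \<bullet> w)) (at u)"
        and dDg: "(G has_derivative Dg) (at v1)"
        and eq: "ht + v1 \<bullet> gx = Rcoef \<beta> h s1 x1 * ((\<Sum>i\<in>UNIV. Dg (axis i 1) $ i) - v1 \<bullet> G v1)"
        using pde s1pos by blast
      define a where "a = Rcoef \<beta> h s1 x1"
      have a: "a0 \<le> a" "a \<le> a1" using coef[OF s1pos] ny1 y1n unfolding a_def by auto
      have rne1: "\<rho>0 + 4 * a0 * (s1 - s0) \<noteq> 0" using rho1 unfolding \<rho>1_def \<rho>_def by simp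
      have rr: "\<rho>0 + 4 * a0 * (s1 - s0) = \<rho>1" unfolding \<rho>1_def \<rho>_def ..
      define Fs where "Fs = F1 * (- K + 4 * a0 * N1 / \<rho>1^2 + 2 * (y1 \<bullet> v0) / \<sigma>)"
      have dFs: "((\<lambda>s. \<psi> s x1 v1) has_real_derivative Fs) (at s1)"
      proof -
        have "((\<lambda>s. F s x1 v1) has_real_derivative Fs) (at s1)"
          using Fb_ds[of \<rho>0 a0 s1 s0 \<sigma> \<delta> K x0 v0 x1 v1] rne1 sig
          unfolding F_def Fs_def F1_def rr N1_def w1_def y1_def by simp
        then show ?thesis unfolding \<psi>_def by (auto intro!: derivative_eq_intros)
      qed
      have tle: "ht - Fs \<le> 0"
      proof (rule time_left_min)
        show "((\<lambda>s. h s x1 v1 - \<psi> s x1 v1) has_real_derivative ht - Fs) (at s1 within {0..T})"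
          by (intro DERIV_diff dht has_field_derivative_at_within[OF dFs])
        define \<eta> where "\<eta> = min (s1 - s0) ((R - norm y1) / (norm v0 + 1))"
        have nv: "0 < norm v0 + 1" by (simp add: add_nonneg_pos)
        have eta: "0 < \<eta>" unfolding \<eta>_def using False s1 ny1 nv by (auto intro!: divide_pos_pos)
        show "0 < \<eta>" by (rule eta)
        show "{s1 - \<eta>..s1} \<subseteq> {0..T}" using s1T s0 unfolding \<eta>_def by auto
        fix r assume r: "s1 - \<eta> \<le> r" "r < s1"
        have "norm (x1 - (x0 + r *\<^sub>R v0)) = norm (y1 + (s1 - r) *\<^sub>R v0)"
          unfolding y1_def by (simp add: algebra_simps)
        also have "\<dots> \<le> norm y1 + (s1 - r) * norm v0"
          using norm_triangle_ineq[of y1 "(s1 - r) *\<^sub>R v0"] r by simp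
        also have "(s1 - r) * norm v0 \<le> \<eta> * (norm v0 + 1)"
          using r eta by (intro mult_mono) auto
        also have "\<eta> * (norm v0 + 1) \<le> R - norm y1"
        proof -
          have "\<eta> \<le> (R - norm y1) / (norm v0 + 1)" unfolding \<eta>_def by simp
          then show ?thesis using pos_le_divide_eq[OF nv] by simp
        qed
        finally have "norm (x1 - (x0 + r *\<^sub>R v0)) \<le> R" by simp
        moreover have "s0 \<le> r" using r unfolding \<eta>_def by auto
        ultimately have "(r, x1, v1) \<in> D" unfolding D_def using r s1 v1D by auto
        then show "h s1 x1 v1 - \<psi> s1 x1 v1 \<le> h r x1 v1 - \<psi> r x1 v1" by (rule wmin)
      qed
      define g\<psi> where "g\<psi> = (- (2 * F1 / \<sigma>)) *\<^sub>R y1"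
      have gxeq: "gx = g\<psi>"
      proof -
        have d1: "((\<lambda>x. \<psi> s1 x v1) has_derivative (\<lambda>w. g\<psi> \<bullet> w)) (at x1)"
        proof -
          have "((\<lambda>x. F s1 x v1) has_derivative (\<lambda>w. g\<psi> \<bullet> w)) (at x1)"
            using Fb_dx[of \<sigma> \<delta> K s0 \<rho>0 a0 x0 v0 s1 v1 x1] sig
            unfolding F_def g\<psi>_def F1_def y1_def by simp
          then show ?thesis unfolding \<psi>_def by (auto intro!: derivative_eq_intros)
        qed
        have "((\<lambda>x. h s1 x v1 - \<psi> s1 x v1) has_derivative (\<lambda>w. (gx - g\<psi>) \<bullet> w)) (at x1)"
          using has_derivative_diff[OF dgx d1] by (simp add: inner_diff_left)
        moreover have "eventually (\<lambda>x. h s1 x1 v1 - \<psi> s1 x1 v1 \<le> h s1 x v1 - \<psi> s1 x v1) (at x1)"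
        proof -
          have "eventually (\<lambda>x. x \<in> ball x1 (R - norm y1)) (at x1)"
            using ny1 by (intro eventually_at_in_open') auto
          then show ?thesis
          proof (rule eventually_mono)
            fix x assume "x \<in> ball x1 (R - norm y1)"
            then have "norm (x - x1) < R - norm y1" by (simp add: dist_norm norm_minus_commute)
            moreover have "norm (x - (x0 + s1 *\<^sub>R v0)) \<le> norm (x - x1) + norm y1"
              using norm_triangle_ineq[of "x - x1" y1] unfolding y1_def by (simp add: algebra_simps)
            ultimately have "(s1, x, v1) \<in> D" unfolding D_def using s1 v1D by auto
            then show "h s1 x1 v1 - \<psi> s1 x1 v1 \<le> h s1 x v1 - \<psi> s1 x v1" by (rule wmin)
          qed
        qed
        ultimately have "gx - g\<psi> = 0" by (rule grad_zero_min)
        then show ?thesis by simp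
      qed
      define GF where "GF u = (- (2 * F s1 x1 u / \<rho>1)) *\<^sub>R (u - v0)" for u
      define cF where "cF = - (2 * F1 / \<rho>1)"
      define DF where "DF w = cF *\<^sub>R w + (- (2 * ((cF *\<^sub>R w1) \<bullet> w) / \<rho>1)) *\<^sub>R w1" for w
      have dGF: "((\<lambda>u. \<psi> s1 x1 u) has_derivative (\<lambda>w. GF u \<bullet> w)) (at u)" for u
      proof -
        have "((\<lambda>u. F s1 x1 u) has_derivative (\<lambda>w. GF u \<bullet> w)) (at u)"
          using Fb_dv[of \<rho>0 a0 s1 s0 \<delta> K \<sigma> x0 v0 x1 u] rne1 unfolding F_def GF_def rr by simp
        then show ?thesis unfolding \<psi>_def by (auto intro!: derivative_eq_intros)
      qed
      have dDF: "(GF has_derivative DF) (at v1)"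
        using Fb_dvv[of \<rho>1 \<rho>0 a0 s1 s0 \<delta> K \<sigma> x0 v0 x1 v1] rr rho1(3)
        unfolding GF_def F_def DF_def cF_def F1_def w1_def by simp
      have so: "(\<lambda>u. G u - GF u) v1 = 0 \<and> 0 \<le> (\<Sum>i\<in>UNIV. (\<lambda>w. Dg w - DF w) (axis i 1) $ i)"
      proof (intro conjI)
        have ev: "\<forall>\<^sub>F u in nhds v1. ((\<lambda>v. h s1 x1 v - \<psi> s1 x1 v) has_derivative (\<lambda>w. (G u - GF u) \<bullet> w)) (at u)"
          using dG
        proof (rule eventually_mono)
          fix u assume "((\<lambda>u'. h s1 x1 u') has_derivative (\<lambda>w. G u \<bullet> w)) (at u)"
          from has_derivative_diff[OF this dGF[of u]]
          show "((\<lambda>v. h s1 x1 v - \<psi> s1 x1 v) has_derivative (\<lambda>w. (G u - GF u) \<bullet> w)) (at u)"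
            by (simp add: inner_diff_left)
        qed
        have dd: "((\<lambda>u. G u - GF u) has_derivative (\<lambda>w. Dg w - DF w)) (at v1)"
          by (rule has_derivative_diff[OF dDg dDF])
        have mn: "eventually (\<lambda>u. h s1 x1 v1 - \<psi> s1 x1 v1 \<le> h s1 x1 u - \<psi> s1 x1 u) (nhds v1)"
        proof -
          have "eventually (\<lambda>u. u \<in> ball v1 (Rv - norm w1)) (nhds v1)"
            using nw1 by (intro eventually_nhds_in_open) auto
          then show ?thesis
          proof (rule eventually_mono)
            fix u assume "u \<in> ball v1 (Rv - norm w1)"
            then have "norm (u - v1) < Rv - norm w1" by (simp add: dist_norm norm_minus_commute)
            moreover have "norm (u - v0) \<le> norm (u - v1) + norm w1"
              using norm_triangle_ineq[of "u - v1" w1] unfolding w1_def by (simp add: algebra_simps)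
            ultimately have "(s1, x1, u) \<in> D" unfolding D_def using s1 x1D by auto
            then show "h s1 x1 v1 - \<psi> s1 x1 v1 \<le> h s1 x1 u - \<psi> s1 x1 u" by (rule wmin)
          qed
        qed
        show "(\<lambda>u. G u - GF u) v1 = 0" by (rule second_order_min(1)[OF ev dd mn])
        show "0 \<le> (\<Sum>i\<in>UNIV. (\<lambda>w. Dg w - DF w) (axis i 1) $ i)" by (rule second_order_min(2)[OF ev dd mn])
      qed
      have Geq: "G v1 = GF v1" using so by simp
      have trle: "(\<Sum>i\<in>UNIV. DF (axis i 1) $ i) \<le> (\<Sum>i\<in>UNIV. Dg (axis i 1) $ i)"
        using so by (simp add: sum_subtractf)
      have trDF: "(\<Sum>i\<in>UNIV. DF (axis i 1) $ i) = real CARD('n) * cF - 2 * cF / \<rho>1 * N1"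
        unfolding DF_def N1_def by (rule trace_DF)
      have apos: "0 \<le> a" using a c by simp
      have "ht + v1 \<bullet> gx = a * ((\<Sum>i\<in>UNIV. Dg (axis i 1) $ i) - v1 \<bullet> G v1)" using eq unfolding a_def .
      also have "\<dots> \<ge> a * ((\<Sum>i\<in>UNIV. DF (axis i 1) $ i) - v1 \<bullet> GF v1)"
        using trle apos Geq by (intro mult_left_mono) auto
      finally have ge: "a * ((\<Sum>i\<in>UNIV. DF (axis i 1) $ i) - v1 \<bullet> GF v1) \<le> Fs + v1 \<bullet> g\<psi>"
        using tle gxeq by simp
      have lhs: "Fs + v1 \<bullet> g\<psi> = F1 * (- K + 4 * a0 * N1 / \<rho>1^2 - 2 * (w1 \<bullet> y1) / \<sigma>)"
      proof -
        have "v1 \<bullet> g\<psi> = - (2 * F1 / \<sigma>) * (v1 \<bullet> y1)" unfolding g\<psi>_def by simp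
        moreover have "w1 \<bullet> y1 = v1 \<bullet> y1 - y1 \<bullet> v0" unfolding w1_def
          by (simp only: inner_diff_left inner_commute[of v0 y1])
        ultimately show ?thesis unfolding Fs_def using alg1[of \<sigma> F1 K "4 * a0 * N1 / \<rho>1^2" "y1 \<bullet> v0" "v1 \<bullet> y1"] sig
          by simp
      qed
      have rhs: "(\<Sum>i\<in>UNIV. DF (axis i 1) $ i) - v1 \<bullet> GF v1
          = F1 * (- 2 * real CARD('n) / \<rho>1 + 4 * N1 / \<rho>1^2 + 2 * (v1 \<bullet> w1) / \<rho>1)"
      proof -
        have "v1 \<bullet> GF v1 = cF * (v1 \<bullet> w1)" unfolding GF_def cF_def F1_def w1_def by simp
        then show ?thesis unfolding trDF cF_def using alg2[where \<rho>=\<rho>1 and F=F1 and n="real CARD('n)" and N=N1 and W="v1 \<bullet> w1"] rho1 by simp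
      qed
      have si: "- K + 4 * a0 * N1 / \<rho>1^2 - 2 * (w1 \<bullet> y1) / \<sigma>
           < a * (- 2 * real CARD('n) / \<rho>1 + 4 * N1 / \<rho>1^2 + 2 * (v1 \<bullet> w1) / \<rho>1)"
      proof (rule sub_ineq[OF c(1) a rho0 rho1(1) sig Spos rho1(2)])
        show "N1 = (norm w1)^2" unfolding N1_def by (simp add: power2_norm_eq_inner)
        show "Y1 = (norm y1)^2" unfolding Y1_def by (simp add: power2_norm_eq_inner)
        show "N1 / \<rho>1 + Y1 / \<sigma> < M0" by (rule QM)
        show "\<bar>w1 \<bullet> y1\<bar> \<le> norm w1 * norm y1" by (rule Cauchy_Schwarz_ineq2)
        have "v1 \<bullet> w1 = N1 + v0 \<bullet> w1" unfolding N1_def w1_def by (simp add: inner_diff_left inner_diff_right inner_commute)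
        moreover have "- (norm v0 * norm w1) \<le> v0 \<bullet> w1" using Cauchy_Schwarz_ineq2[of v0 w1] by linarith
        ultimately show "N1 - norm v0 * norm w1 \<le> v1 \<bullet> w1" by linarith
        show "K = 2 * M0 * S + a1 * (2 * real CARD('n) + (norm v0)^2) / \<rho>0 + 1" unfolding K_def cc_def ..
      qed auto
      have F1pos: "0 < F1" unfolding F1_def by (rule Fpos)
      have "Fs + v1 \<bullet> g\<psi> < a * ((\<Sum>i\<in>UNIV. DF (axis i 1) $ i) - v1 \<bullet> GF v1)"
      proof -
        have "F1 * (- K + 4 * a0 * N1 / \<rho>1^2 - 2 * (w1 \<bullet> y1) / \<sigma>)
           < F1 * (a * (- 2 * real CARD('n) / \<rho>1 + 4 * N1 / \<rho>1^2 + 2 * (v1 \<bullet> w1) / \<rho>1))"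
          by (rule mult_strict_left_mono[OF si F1pos])
        then show ?thesis unfolding lhs rhs by (simp only: mult.left_commute[of F1 a])
      qed
      with ge show False by simp
    qed
  qed
  have "\<delta> * exp (- M0) \<le> h t xt vt" using target main by linarith
  then show ?thesis unfolding M0_def V_def .
qed

lemma int_vec_0: "int_vec (0::real^'n)" unfolding int_vec_def by simp

lemma int_vec_uminus: "int_vec (z::real^'n) \<Longrightarrow> int_vec (- z)" unfolding int_vec_def by simp

lemma td_le:
  fixes x y :: "real^'n"
  shows "torus_dist x y \<le> norm (x - y)"
proof -
  have mem: "norm (x - y) \<in> {norm (x - y - z) | z. int_vec z}"
    by (rule CollectI, rule exI[of _ 0]) (simp add: int_vec_0)
  have bdd: "bdd_below {norm (x - y - z) | z. int_vec z}"
    by (rule bdd_belowI[of _ 0]) auto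
  show ?thesis unfolding torus_dist_def by (rule cInf_lower[OF mem bdd])
qed

lemma td_lt:
  fixes x y :: "real^'n"
  assumes "torus_dist x y < r"
  shows "\<exists>z. int_vec z \<and> norm (x - y - z) < r"
proof -
  have mem: "norm (x - y) \<in> {norm (x - y - z) | z. int_vec z}"
    by (rule CollectI, rule exI[of _ 0]) (simp add: int_vec_0)
  then have ne: "{norm (x - y - z) | z. int_vec z} \<noteq> {}" by (intro notI) (simp only: empty_iff)
  obtain u where "u \<in> {norm (x - y - z) | z. int_vec z}" "u < r"
    using cInf_lessD[OF ne assms[unfolded torus_dist_def]] by (elim bexE)
  then show ?thesis by (elim CollectE exE) auto
qed

lemma pow4_bound:
  fixes a b :: real
  assumes "0 \<le> a" "0 \<le> b"
  shows "(a + b)^4 \<le> 8 * (a^4 + b^4)"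
proof -
  have 1: "(a + b)^2 \<le> 2 * (a^2 + b^2)"
  proof -
    have "0 \<le> (a - b)^2" by simp
    then show ?thesis unfolding power2_eq_square by (simp add: algebra_simps)
  qed
  have "(a + b)^4 = ((a + b)^2)^2" by simp
  also have "\<dots> \<le> (2 * (a^2 + b^2))^2" using 1 by (intro power_mono) auto
  also have "\<dots> = 4 * (a^2 + b^2)^2" unfolding power2_eq_square by (simp add: algebra_simps)
  also have "(a^2 + b^2)^2 \<le> 2 * (a^4 + b^4)"
  proof -
    have "0 \<le> (a^2 - b^2)^2" by simp
    then show ?thesis by (simp add: power2_eq_square power4_eq_xxxx algebra_simps)
  qed
  finally show ?thesis by simp
qed

lemma final_ineq:
  fixes \<kappa> \<delta> C nv nv0 :: real
  assumes "0 \<le> \<kappa>" "0 < \<delta>" "8 * \<kappa> \<le> C" "exp (8 * \<kappa> * (nv0 + 1)^4) / \<delta> \<le> C" "0 \<le> nv" "0 \<le> nv0"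
  shows "exp (- C * nv ^ 4) / C \<le> \<delta> * exp (- (\<kappa> * (nv + nv0 + 1)^3))"
proof -
  define B where "B = (nv0 + 1)^4"
  define V where "V = nv + nv0 + 1"
  have V1: "1 \<le> V" unfolding V_def using assms by simp
  have "V^3 \<le> V^4" using V1 by (simp add: power_increasing)
  also have "V^4 \<le> 8 * (nv^4 + B)" unfolding V_def B_def
    using pow4_bound[of nv "nv0 + 1"] assms by (simp add: add.assoc)
  finally have "V^3 \<le> 8 * (nv^4 + B)" .
  then have "\<kappa> * V^3 \<le> \<kappa> * (8 * (nv^4 + B))" using assms(1) by (intro mult_left_mono)
  then have VB: "\<kappa> * V^3 \<le> 8 * \<kappa> * (nv^4 + B)" by (simp only: mult.left_commute mult.assoc)
  have "0 < exp (8 * \<kappa> * (nv0 + 1)^4) / \<delta>" using assms(2) by simp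
  then have Cpos: "0 < C" using assms(4) by linarith
  have e1: "exp (- C * nv ^ 4) \<le> exp (- (8 * \<kappa>) * nv ^ 4)"
    using assms by (simp add: mult_right_mono)
  have e2: "1 / C \<le> \<delta> * exp (- (8 * \<kappa> * B))"
  proof -
    have "exp (8 * \<kappa> * B) / \<delta> \<le> C" using assms unfolding B_def by simp
    then have E: "exp (8 * \<kappa> * B) \<le> C * \<delta>" using assms(2) by (simp add: divide_le_eq)
    have "1 / C = \<delta> / (C * \<delta>)" using assms(2) Cpos by simp
    also have "\<dots> \<le> \<delta> / exp (8 * \<kappa> * B)"
      by (rule divide_left_mono[OF E]) (use assms(2) Cpos in auto)
    also have "\<delta> / exp (8 * \<kappa> * B) = \<delta> * exp (- (8 * \<kappa> * B))" by (simp add: exp_minus divide_inverse)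
    finally show ?thesis .
  qed
  have "exp (- C * nv ^ 4) / C = exp (- C * nv ^ 4) * (1 / C)" by simp
  also have "\<dots> \<le> exp (- (8 * \<kappa>) * nv ^ 4) * (\<delta> * exp (- (8 * \<kappa> * B)))"
    using e1 e2 Cpos by (intro mult_mono) auto
  also have "\<dots> = \<delta> * exp (- (8 * \<kappa> * (nv^4 + B)))"
    by (simp add: exp_add[symmetric] algebra_simps)
  also have "\<dots> \<le> \<delta> * exp (- (\<kappa> * V^3))" using VB assms by simp
  finally show ?thesis unfolding V_def .
qed

theorem lemma4p6:
  fixes \<beta> lam \<Lambda> \<delta> R Tlow :: real and v0 :: "real^'n"
  assumes "0 \<le> \<beta>" "\<beta> \<le> 1" "0 < lam" "lam < \<Lambda>" "0 < \<delta>"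
    "0 < R" "R \<le> 1" "0 < Tlow"
  shows "\<exists>C>0. \<forall>(T::real) (x0::real^'n) (h :: real \<Rightarrow> real^'n \<Rightarrow> real^'n \<Rightarrow> real).
     Tlow < T \<longrightarrow> T \<le> 1 \<longrightarrow>
     classical_solution \<beta> T h \<longrightarrow>
     (\<forall>t\<in>{0..T}. \<forall>x v. h t x v \<le> \<Lambda>) \<longrightarrow>
     (\<forall>t\<in>{0..T}. \<forall>x v. torus_dist x (x0 + t *\<^sub>R v0) < R \<and> norm (v - v0) < R
         \<longrightarrow> \<delta> \<le> h t x v) \<longrightarrow>
     (\<forall>t\<in>{Tlow..T}. \<forall>x v. torus_dist x (x0 + t *\<^sub>R v0) < R / 2 \<longrightarrow>
         exp (- C * norm v ^ 4) / C \<le> h t x v)"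
proof -
  define Z where "Z = integral\<^sup>L lborel (gauss :: real^'n \<Rightarrow> real)"
  define a0 where "a0 = min 1 (I0 \<delta> R v0)"
  define a1 where "a1 = max 1 (\<Lambda> * Z)"
  define cc where "cc = 2 * real CARD('n) + (norm v0)^2"
  define s1c where "s1c = 2 + 4 / R"
  define c1 where "c1 = min (min Tlow 1) (min (1 / (16 * s1c)) (min (R^2 / (16 * a1 * cc)) ((2 / a0) / 16)))"
  define \<kappa> where "\<kappa> = (2 / a0) / c1"
  define B where "B = (norm v0 + 1)^4"
  define C where "C = max (8 * \<kappa>) (exp (8 * \<kappa> * B) / \<delta>)"
  have I0p: "0 < I0 \<delta> R v0" by (rule I0_pos) (use assms in auto)
  have a0: "0 < a0" "a0 \<le> 1" unfolding a0_def using I0p by auto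
  have a1: "1 \<le> a1" unfolding a1_def by simp
  have cc: "2 \<le> cc"
  proof -
    have "1 \<le> real CARD('n)" by simp
    moreover have "0 \<le> (norm v0)^2" by simp
    ultimately show ?thesis unfolding cc_def by linarith
  qed
  have s1c: "0 < s1c" unfolding s1c_def using assms by (simp add: add_pos_nonneg)
  have c1pos: "0 < c1" unfolding c1_def using assms a0 a1 cc s1c by (auto intro!: divide_pos_pos mult_pos_pos)
  have c1le: "c1 \<le> Tlow" "c1 \<le> 1" "c1 \<le> 1 / (16 * s1c)" "c1 \<le> R^2 / (16 * a1 * cc)" "c1 \<le> (2 / a0) / 16"
    unfolding c1_def by auto
  have cs: "(2 + 4/R) * c1 \<le> 1/16"
  proof -
    have "s1c * c1 \<le> s1c * (1 / (16 * s1c))" using c1le(3) s1c by (intro mult_left_mono) auto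
    then show ?thesis unfolding s1c_def[symmetric] using s1c by simp
  qed
  have ca: "a1 * (2 * real CARD('n) + (norm v0)^2) * c1 \<le> R^2/16"
  proof -
    have p: "0 < a1 * cc" using a1 cc by simp
    have "(a1 * cc) * c1 \<le> (a1 * cc) * (R^2 / (16 * a1 * cc))" using c1le(4) p by (intro mult_left_mono) auto
    also have "\<dots> = R^2 / 16" using a1 cc by (simp add: field_simps)
    finally show ?thesis unfolding cc_def by simp
  qed
  have k16: "16 \<le> \<kappa>"
  proof -
    have "16 * c1 \<le> 2 / a0" using c1le(5) by simp
    then show ?thesis unfolding \<kappa>_def using pos_le_divide_eq[OF c1pos, of 16 "2 / a0"] by (simp add: mult.commute)
  qed
  have kpos: "0 \<le> \<kappa>" using k16 by simp
  have C8: "8 * \<kappa> \<le> C" and CE: "exp (8 * \<kappa> * (norm v0 + 1)^4) / \<delta> \<le> C" unfolding C_def B_def by auto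
  have Cpos: "0 < C" using C8 k16 by simp
  show ?thesis
  proof (intro exI[of _ C] conjI allI impI ballI)
    show "0 < C" by (rule Cpos)
    fix T :: real and x0 :: "real^'n" and h :: "real \<Rightarrow> real^'n \<Rightarrow> real^'n \<Rightarrow> real"
    fix t x v
    assume T: "Tlow < T" "T \<le> 1" and sol: "classical_solution \<beta> T h"
      and up: "\<forall>t\<in>{0..T}. \<forall>x v. h t x v \<le> \<Lambda>"
      and lowt: "\<forall>t\<in>{0..T}. \<forall>x v. torus_dist x (x0 + t *\<^sub>R v0) < R \<and> norm (v - v0) < R \<longrightarrow> \<delta> \<le> h t x v"
      and t: "t \<in> {Tlow..T}" and xt: "torus_dist x (x0 + t *\<^sub>R v0) < R / 2"
    note sol' = sol[unfolded classical_solution_def]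
    have per: "\<forall>t x v z. int_vec z \<longrightarrow> h t (x + z) v = h t x v" using sol' by (rule conjunct1)
    have hnn: "\<forall>t\<in>{0..T}. \<forall>x v. 0 \<le> h t x v" using sol' by (rule conjunct2[THEN conjunct1])
    have hcont: "continuous_on ({0..T} \<times> UNIV \<times> UNIV) (\<lambda>(t, x, v). h t x v)"
      using sol' by (rule conjunct2[THEN conjunct2, THEN conjunct1])
    have low: "\<And>s x v. s \<in> {0..T} \<Longrightarrow> norm (x - (x0 + s *\<^sub>R v0)) < R \<Longrightarrow> norm (v - v0) < R \<Longrightarrow> \<delta> \<le> h s x v"
    proof -
      fix s x v assume "s \<in> {0..T}" "norm (x - (x0 + s *\<^sub>R v0)) < R" "norm (v - v0) < R"
      moreover have "torus_dist x (x0 + s *\<^sub>R v0) \<le> norm (x - (x0 + s *\<^sub>R v0))" by (rule td_le)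
      ultimately show "\<delta> \<le> h s x v" using lowt by force
    qed
    have coef: "\<And>s x. s \<in> {0<..T} \<Longrightarrow> norm (x - (x0 + s *\<^sub>R v0)) < R \<Longrightarrow> a0 \<le> Rcoef \<beta> h s x \<and> Rcoef \<beta> h s x \<le> a1"
    proof -
      fix s x assume s: "s \<in> {0<..T}" and xs: "norm (x - (x0 + s *\<^sub>R v0)) < R"
      have sT: "s \<in> {0..T}" using s by auto
      have cont: "continuous_on UNIV (\<lambda>v. h s x v)"
      proof -
        have "continuous_on UNIV (\<lambda>v. (\<lambda>(t, x, v). h t x v) (s, x, v))"
          by (rule continuous_on_compose2[OF hcont]) (use sT in \<open>auto intro!: continuous_intros\<close>)
        then show ?thesis by simp
      qed
      have "min 1 (I0 \<delta> R v0) \<le> pow_beta (mu_integral (h s x)) \<beta> \<and>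
         pow_beta (mu_integral (h s x)) \<beta> \<le> max 1 (\<Lambda> * integral\<^sup>L lborel (gauss :: real^'n \<Rightarrow> real))"
      proof (rule coef_bounds[where f = "h s x"])
        show "continuous_on UNIV (h s x)" using cont by simp
        show "\<And>v. 0 \<le> h s x v" using hnn sT by blast
        show "\<And>v. h s x v \<le> \<Lambda>" using up sT by blast
        show "\<And>v. norm (v - v0) < R \<Longrightarrow> \<delta> \<le> h s x v" using low[OF sT xs] by blast
      qed (use assms in auto)
      then show "a0 \<le> Rcoef \<beta> h s x \<and> Rcoef \<beta> h s x \<le> a1"
        unfolding a0_def a1_def Z_def Rcoef_def .
    qed
    obtain z where z: "int_vec z" "norm (x - (x0 + t *\<^sub>R v0) - z) < R / 2" using td_lt[OF xt] by blast
    define x' where "x' = x - z"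
    have hx: "h t x v = h t x' v" using per z(1) unfolding x'_def by (metis diff_add_cancel)
    have x'b: "norm (x' - (x0 + t *\<^sub>R v0)) < R / 2" using z(2) unfolding x'_def by (simp add: algebra_simps)
    have "\<delta> * exp (- (\<kappa> * (norm v + norm v0 + 1)^3)) \<le> h t x' v"
    proof (rule barrier[OF sol low coef a0(1) _ assms(5,6) c1pos c1le(2) cs ca \<kappa>_def k16 _ _ x'b])
      show "a0 \<le> a1" using a0 a1 by simp
      show "c1 \<le> t" using c1le(1) t by simp
      show "t \<le> T" using t by simp
    qed
    moreover have "exp (- C * norm v ^ 4) / C \<le> \<delta> * exp (- (\<kappa> * (norm v + norm v0 + 1)^3))"
      by (rule final_ineq[OF kpos assms(5) C8 CE]) auto
    ultimately show "exp (- C * norm v ^ 4) / C \<le> h t x v" using hx by simp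
  qed
qed

end
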